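(* Let $n\ge2$ and let $\overline{x}=x_1,\dots,x_n$ be variables. For a subsequence $x_{i_1},\dots,x_{i_k}$ let $\pi_k:S^{fd}_n(\mathbb{Q})\to S^{fd}_k(\mathbb{Q})$ be the projection $\pi_k(p)=\{\exists x_{i_{k+1}},\dots,x_{i_n}\,\phi(x_1,\dots,x_n):\phi\in p\}$, where $x_{i_{k+1}},\dots,x_{i_n}$ are the remaining variables. Let $S^{<}_n(\mathbb{Q})\subseteq S^{fd}_n(\mathbb{Q})$ be the set of types $p$ with $x_1<x_2<\cdots<x_n\in p$. Then the map $\nabla:S^{<}_n(\mathbb{Q})\to S^{fd}_1(\mathbb{Q})\times S^{<}_{n-1}(\mathbb{Q})$, $\nabla(p)=\langle\pi_1(p),\pi_{n-1}(p)\rangle$, where $\pi_1$ is the projection onto $x_1$ and $\pi_{n-1}$ the projection onto $x_2,\dots,x_n$, is injective.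
   Context: We work in the theory of the dense linear order $\langle\mathbb{Q},\le\rangle$ (DLO). $S_n(\mathbb{Q})$ is the set of complete $n$-types with parameters from $\mathbb{Q}$, and $S^{fd}_n(\mathbb{Q})\subseteq S_n(\mathbb{Q})$ is the set of those types that are definable over a finite set of parameters $Q_0\subseteq\mathbb{Q}$, i.e. for every formula $\phi(\overline{x},\overline{y})$ without parameters there is a formula $\psi(\overline{y},\overline{b})$ with $\overline b$ from $Q_0$ such that $\phi(\overline{x},\overline{a})\in p\iff\psi(\overline{a},\overline{b})$ holds. *)

theory Defs
  imports Complex_Main
begin

text \<open>Terms: variables (de Bruijn indices) and parameters (elements of Q).
  The free variable with index i stands for x_(i+1).\<close>
datatype tm = Var nat | Par rat

datatype fm = Le tm tm | Eq tm tm | Neg fm | Conj fm fm | Ex fm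

definition Lt :: "tm \<Rightarrow> tm \<Rightarrow> fm" where
  "Lt s t = Neg (Le t s)"

fun tval :: "(nat \<Rightarrow> rat) \<Rightarrow> tm \<Rightarrow> rat" where
  "tval e (Var i) = e i"
| "tval e (Par a) = a"

fun eval :: "(nat \<Rightarrow> rat) \<Rightarrow> fm \<Rightarrow> bool" where
  "eval e (Le s t) = (tval e s \<le> tval e t)"
| "eval e (Eq s t) = (tval e s = tval e t)"
| "eval e (Neg \<phi>) = (\<not> eval e \<phi>)"
| "eval e (Conj \<phi> \<psi>) = (eval e \<phi> \<and> eval e \<psi>)"
| "eval e (Ex \<phi>) = (\<exists>q. eval (case_nat q e) \<phi>)"

fun tfv :: "tm \<Rightarrow> nat set" where
  "tfv (Var i) = {i}"
| "tfv (Par a) = {}"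

fun fvars :: "fm \<Rightarrow> nat set" where
  "fvars (Le s t) = tfv s \<union> tfv t"
| "fvars (Eq s t) = tfv s \<union> tfv t"
| "fvars (Neg \<phi>) = fvars \<phi>"
| "fvars (Conj \<phi> \<psi>) = fvars \<phi> \<union> fvars \<psi>"
| "fvars (Ex \<phi>) = {i. Suc i \<in> fvars \<phi>}"

fun tparams :: "tm \<Rightarrow> rat set" where
  "tparams (Var i) = {}"
| "tparams (Par a) = {a}"

fun params :: "fm \<Rightarrow> rat set" where
  "params (Le s t) = tparams s \<union> tparams t"
| "params (Eq s t) = tparams s \<union> tparams t"
| "params (Neg \<phi>) = params \<phi>"
| "params (Conj \<phi> \<psi>) = params \<phi> \<union> params \<psi>"
| "params (Ex \<phi>) = params \<phi>"

fun tsubst :: "(nat \<Rightarrow> tm) \<Rightarrow> tm \<Rightarrow> tm" where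
  "tsubst \<sigma> (Var i) = \<sigma> i"
| "tsubst \<sigma> (Par a) = Par a"

fun tshift :: "tm \<Rightarrow> tm" where
  "tshift (Var i) = Var (Suc i)"
| "tshift (Par a) = Par a"

fun subst :: "(nat \<Rightarrow> tm) \<Rightarrow> fm \<Rightarrow> fm" where
  "subst \<sigma> (Le s t) = Le (tsubst \<sigma> s) (tsubst \<sigma> t)"
| "subst \<sigma> (Eq s t) = Eq (tsubst \<sigma> s) (tsubst \<sigma> t)"
| "subst \<sigma> (Neg \<phi>) = Neg (subst \<sigma> \<phi>)"
| "subst \<sigma> (Conj \<phi> \<psi>) = Conj (subst \<sigma> \<phi>) (subst \<sigma> \<psi>)"
| "subst \<sigma> (Ex \<phi>) = Ex (subst (case_nat (Var 0) (\<lambda>j. tshift (\<sigma> j))) \<phi>)"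

text \<open>Complete n-types over Q: complete sets of formulas in x_1..x_n with parameters
  from Q that are consistent with the elementary diagram of Q, i.e. finitely
  satisfiable in Q.\<close>
definition is_type :: "nat \<Rightarrow> fm set \<Rightarrow> bool" where
  "is_type n p \<longleftrightarrow>
     p \<subseteq> {\<phi>. fvars \<phi> \<subseteq> {..<n}} \<and>
     (\<forall>F. finite F \<and> F \<subseteq> p \<longrightarrow> (\<exists>e. \<forall>\<phi>\<in>F. eval e \<phi>)) \<and>
     (\<forall>\<phi>. fvars \<phi> \<subseteq> {..<n} \<longrightarrow> \<phi> \<in> p \<or> Neg \<phi> \<in> p)"

definition S :: "nat \<Rightarrow> fm set set" where
  "S n = {p. is_type n p}"

text \<open>Variables x_i have indices i-1 < n; y_j have indices n+j-1.\<close>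
definition definable_over :: "nat \<Rightarrow> fm set \<Rightarrow> rat set \<Rightarrow> bool" where
  "definable_over n p Q0 \<longleftrightarrow>
     (\<forall>\<phi> m. params \<phi> = {} \<and> fvars \<phi> \<subseteq> {..<n+m} \<longrightarrow>
        (\<exists>\<psi>. params \<psi> \<subseteq> Q0 \<and> fvars \<psi> \<subseteq> {..<m} \<and>
           (\<forall>a :: nat \<Rightarrow> rat.
              subst (\<lambda>i. if i < n then Var i else Par (a (i - n))) \<phi> \<in> p
              \<longleftrightarrow> eval a \<psi>)))"

definition S_fd :: "nat \<Rightarrow> fm set set" where
  "S_fd n = {p \<in> S n. \<exists>Q0. finite Q0 \<and> definable_over n p Q0}"

text \<open>The formula x_1 < x_2 < ... < x_k (the empty conjunction is x_1 = x_1).\<close>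
definition lt_chain :: "nat \<Rightarrow> fm" where
  "lt_chain k = foldr Conj (map (\<lambda>i. Lt (Var i) (Var (Suc i))) [0..<k - 1])
                 (Eq (Var 0) (Var 0))"

definition S_lt :: "nat \<Rightarrow> fm set set" where
  "S_lt n = {p \<in> S_fd n. lt_chain n \<in> p}"

text \<open>Projection onto the subsequence x_(\<rho> 0 + 1), ..., x_(\<rho> (k-1) + 1), renamed to
  x_1..x_k: the formulas \<psi>(x_1..x_k) with \<psi>(x_(\<rho> 0+1),...,x_(\<rho>(k-1)+1)) \<in> p
  (this is the complete type generated by the existential projections).\<close>
definition proj :: "(nat \<Rightarrow> nat) \<Rightarrow> nat \<Rightarrow> fm set \<Rightarrow> fm set" where
  "proj \<rho> k p = {\<psi>. fvars \<psi> \<subseteq> {..<k} \<and> subst (\<lambda>i. Var (\<rho> i)) \<psi> \<in> p}"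

definition nabla :: "nat \<Rightarrow> fm set \<Rightarrow> fm set \<times> fm set" where
  "nabla n p = (proj (\<lambda>i. i) 1 p, proj Suc (n - 1) p)"

end

theory Submission
  imports Defs
begin

lemma between_exists:
  fixes X Y :: "rat set"
  assumes "finite X" "finite Y" "\<forall>x\<in>X. \<forall>y\<in>Y. x < y"
  shows "\<exists>z. (\<forall>x\<in>X. x < z) \<and> (\<forall>y\<in>Y. z < y)"
proof (cases "X = {}")
  case True
  show ?thesis
  proof (cases "Y = {}")
    case True then show ?thesis using \<open>X = {}\<close> by auto
  next
    case False
    have "\<forall>y\<in>Y. Min Y - 1 < y"
    proof
      fix y assume "y \<in> Y" then have "Min Y \<le> y" using Min_le[OF assms(2)] by blast
      then show "Min Y - 1 < y" by linarith
    qed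
    then show ?thesis using \<open>X = {}\<close> by blast
  qed
next
  case False
  show ?thesis
  proof (cases "Y = {}")
    case True
    have "\<forall>x\<in>X. x < Max X + 1"
    proof
      fix x assume "x \<in> X" then have "x \<le> Max X" using Max_ge[OF assms(1)] by blast
      then show "x < Max X + 1" by linarith
    qed
    then show ?thesis using True by blast
  next
    case F2: False
    have m: "Max X < Min Y" using assms False F2 by simp
    obtain z where z: "Max X < z" "z < Min Y" using dense[OF m] by blast
    have "(\<forall>x\<in>X. x < z) \<and> (\<forall>y\<in>Y. z < y)"
    proof (intro conjI ballI)
      fix x assume "x \<in> X" then have "x \<le> Max X" using Max_ge[OF assms(1)] by blast
      then show "x < z" using z by linarith
    next
      fix y assume "y \<in> Y" then have "Min Y \<le> y" using Min_le[OF assms(2)] by blast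
      then show "z < y" using z by linarith
    qed
    then show ?thesis by blast
  qed
qed

lemma extension:
  fixes u v :: "'a \<Rightarrow> rat"
  assumes fin: "finite I" and sim: "\<forall>i\<in>I. \<forall>j\<in>I. (u i \<le> u j \<longleftrightarrow> v i \<le> v j)"
  shows "\<exists>q'. \<forall>i\<in>I. (q \<le> u i \<longleftrightarrow> q' \<le> v i) \<and> (u i \<le> q \<longleftrightarrow> v i \<le> q')"
proof (cases "\<exists>i\<in>I. u i = q")
  case True
  then obtain i where i: "i \<in> I" "u i = q" by blast
  have "\<forall>j\<in>I. (q \<le> u j \<longleftrightarrow> v i \<le> v j) \<and> (u j \<le> q \<longleftrightarrow> v j \<le> v i)"
  proof
    fix j assume "j \<in> I"
    then show "(q \<le> u j \<longleftrightarrow> v i \<le> v j) \<and> (u j \<le> q \<longleftrightarrow> v j \<le> v i)"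
      using sim[rule_format, OF i(1) \<open>j \<in> I\<close>] sim[rule_format, OF \<open>j \<in> I\<close> i(1)] i(2) by simp
  qed
  then show ?thesis by blast
next
  case False
  define L where "L = {i\<in>I. u i < q}"
  define U where "U = {i\<in>I. q < u i}"
  have lu: "\<forall>x\<in>v ` L. \<forall>y\<in>v ` U. x < y"
  proof (intro ballI)
    fix x y assume "x \<in> v ` L" "y \<in> v ` U"
    then obtain i j where ij: "i \<in> I" "j \<in> I" "u i < q" "q < u j" "x = v i" "y = v j"
      unfolding L_def U_def by blast
    then have "\<not> u j \<le> u i" by simp
    then have "\<not> v j \<le> v i" using sim ij(1,2) by blast
    then show "x < y" using ij by simp
  qed
  have "finite L" "finite U" using fin unfolding L_def U_def by simp_all
  then obtain z where z: "\<forall>x\<in>v ` L. x < z" "\<forall>y\<in>v ` U. z < y"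
    using between_exists[OF _ _ lu] by blast
  show ?thesis
  proof (intro exI ballI)
    fix i assume i: "i \<in> I"
    have "u i \<noteq> q" using False i by blast
    then have "i \<in> L \<or> i \<in> U" unfolding L_def U_def using i by auto
    then show "(q \<le> u i \<longleftrightarrow> z \<le> v i) \<and> (u i \<le> q \<longleftrightarrow> v i \<le> z)"
    proof
      assume "i \<in> L" then have "u i < q" "v i < z" using z unfolding L_def by auto
      then show ?thesis by simp
    next
      assume "i \<in> U" then have "q < u i" "z < v i" using z unfolding U_def by auto
      then show ?thesis by simp
    qed
  qed
qed

definition terms :: "fm \<Rightarrow> tm set" where
  "terms \<phi> = Var ` fvars \<phi> \<union> Par ` params \<phi>"

definition simt :: "tm set \<Rightarrow> (nat \<Rightarrow> rat) \<Rightarrow> (nat \<Rightarrow> rat) \<Rightarrow> bool" where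
  "simt T e e' \<longleftrightarrow> (\<forall>s\<in>T. \<forall>t\<in>T. (tval e s \<le> tval e t \<longleftrightarrow> tval e' s \<le> tval e' t))"

lemma finite_fvars: "finite (fvars \<phi>)"
proof (induction \<phi>)
  case (Le x1 x2) then show ?case by (cases x1; cases x2) auto
next
  case (Eq x1 x2) then show ?case by (cases x1; cases x2) auto
next
  case (Ex \<phi>)
  have "{i. Suc i \<in> fvars \<phi>} = Suc -` fvars \<phi>" by auto
  then show ?case using Ex finite_vimageI[of "fvars \<phi>" Suc] by (simp add: inj_def)
qed auto

lemma finite_params: "finite (params \<phi>)"
proof (induction \<phi>)
  case (Le x1 x2) then show ?case by (cases x1; cases x2) auto
next
  case (Eq x1 x2) then show ?case by (cases x1; cases x2) auto
qed auto

lemma finite_terms: "finite (terms \<phi>)"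
  unfolding terms_def using finite_fvars finite_params by auto

lemma tm_in_terms:
  "s \<in> terms (Le s t)" "t \<in> terms (Le s t)" "s \<in> terms (Eq s t)" "t \<in> terms (Eq s t)"
  unfolding terms_def by (cases s; auto; cases t; auto)+

lemma simt_sym: "simt T e e' \<Longrightarrow> simt T e' e"
  unfolding simt_def by blast

lemma simt_mono: "simt T e e' \<Longrightarrow> T' \<subseteq> T \<Longrightarrow> simt T' e e'"
  unfolding simt_def by blast

lemma ex_step:
  assumes "simt (terms (Ex \<phi>)) e e'"
  shows "\<exists>q'. simt (terms \<phi>) (case_nat q e) (case_nat q' e')"
proof -
  have "\<forall>i\<in>terms (Ex \<phi>). \<forall>j\<in>terms (Ex \<phi>). (tval e i \<le> tval e j \<longleftrightarrow> tval e' i \<le> tval e' j)"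
    using assms unfolding simt_def by blast
  from extension[OF finite_terms this, of q] obtain q' where
    q': "\<forall>i\<in>terms (Ex \<phi>). (q \<le> tval e i \<longleftrightarrow> q' \<le> tval e' i) \<and> (tval e i \<le> q \<longleftrightarrow> tval e' i \<le> q')"
    by blast
  have key: "\<forall>t\<in>terms \<phi>. (tval (case_nat q e) t = q \<and> tval (case_nat q' e') t = q')
     \<or> (\<exists>t0\<in>terms (Ex \<phi>). tval (case_nat q e) t = tval e t0 \<and> tval (case_nat q' e') t = tval e' t0)"
  proof
    fix t assume t: "t \<in> terms \<phi>"
    show "(tval (case_nat q e) t = q \<and> tval (case_nat q' e') t = q')
     \<or> (\<exists>t0\<in>terms (Ex \<phi>). tval (case_nat q e) t = tval e t0 \<and> tval (case_nat q' e') t = tval e' t0)"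
    proof (cases t)
      case (Var i)
      then show ?thesis
      proof (cases i)
        case 0 then show ?thesis using Var by simp
      next
        case (Suc k)
        have "Var k \<in> terms (Ex \<phi>)" using t Var Suc unfolding terms_def by auto
        then show ?thesis using Var Suc by force
      qed
    next
      case (Par a)
      have "Par a \<in> terms (Ex \<phi>)" using t Par unfolding terms_def by auto
      then show ?thesis using Par by force
    qed
  qed
  have "simt (terms \<phi>) (case_nat q e) (case_nat q' e')"
    unfolding simt_def
  proof (intro ballI)
    fix s t assume s: "s \<in> terms \<phi>" and t: "t \<in> terms \<phi>"
    from key[rule_format, OF s] show "(tval (case_nat q e) s \<le> tval (case_nat q e) t) = (tval (case_nat q' e') s \<le> tval (case_nat q' e') t)"
    proof (elim disjE conjE bexE)
      assume s1: "tval (case_nat q e) s = q" "tval (case_nat q' e') s = q'"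
      from key[rule_format, OF t] show ?thesis
      proof (elim disjE conjE bexE)
        assume "tval (case_nat q e) t = q" "tval (case_nat q' e') t = q'"
        then show ?thesis using s1 by simp
      next
        fix t0 assume "t0 \<in> terms (Ex \<phi>)" "tval (case_nat q e) t = tval e t0" "tval (case_nat q' e') t = tval e' t0"
        then show ?thesis using s1 q' by simp
      qed
    next
      fix s0 assume s0: "s0 \<in> terms (Ex \<phi>)" and s1: "tval (case_nat q e) s = tval e s0" "tval (case_nat q' e') s = tval e' s0"
      from key[rule_format, OF t] show ?thesis
      proof (elim disjE conjE bexE)
        assume "tval (case_nat q e) t = q" "tval (case_nat q' e') t = q'"
        then show ?thesis using s1 s0 q' by simp
      next
        fix t0 assume "t0 \<in> terms (Ex \<phi>)" "tval (case_nat q e) t = tval e t0" "tval (case_nat q' e') t = tval e' t0"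
        then show ?thesis using s1 s0 assms unfolding simt_def by simp
      qed
    qed
  qed
  then show ?thesis by blast
qed

lemma eval_simt: "simt (terms \<phi>) e e' \<Longrightarrow> eval e \<phi> = eval e' \<phi>"
proof (induction \<phi> arbitrary: e e')
  case (Le s t)
  have h: "\<forall>a\<in>terms (Le s t). \<forall>b\<in>terms (Le s t). (tval e a \<le> tval e b) = (tval e' a \<le> tval e' b)"
    using Le unfolding simt_def by blast
  have "(tval e s \<le> tval e t) = (tval e' s \<le> tval e' t)"
    using h tm_in_terms(1,2) by blast
  then show ?case by simp
next
  case (Eq s t)
  have h: "\<forall>a\<in>terms (Eq s t). \<forall>b\<in>terms (Eq s t). (tval e a \<le> tval e b) = (tval e' a \<le> tval e' b)"
    using Eq unfolding simt_def by blast
  have "(tval e s \<le> tval e t) = (tval e' s \<le> tval e' t)" "(tval e t \<le> tval e s) = (tval e' t \<le> tval e' s)"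
    using h tm_in_terms(3,4) by blast+
  then have "(tval e s = tval e t) = (tval e' s = tval e' t)"
    by (metis order.antisym order.refl)
  then show ?case by simp
next
  case (Neg \<phi>)
  have "terms (Neg \<phi>) = terms \<phi>" unfolding terms_def by simp
  then have "eval e \<phi> = eval e' \<phi>" using Neg.IH Neg.prems by simp
  then show ?case by simp
next
  case (Conj \<phi>1 \<phi>2)
  have "terms \<phi>1 \<subseteq> terms (Conj \<phi>1 \<phi>2)" "terms \<phi>2 \<subseteq> terms (Conj \<phi>1 \<phi>2)"
    unfolding terms_def by auto
  then have "simt (terms \<phi>1) e e'" "simt (terms \<phi>2) e e'"
    using Conj.prems simt_mono by blast+
  then have "eval e \<phi>1 = eval e' \<phi>1" "eval e \<phi>2 = eval e' \<phi>2" using Conj.IH by blast+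
  then show ?case by simp
next
  case (Ex \<phi>)
  show ?case
  proof
    assume "eval e (Ex \<phi>)"
    then obtain q where q: "eval (case_nat q e) \<phi>" by auto
    obtain q' where "simt (terms \<phi>) (case_nat q e) (case_nat q' e')"
      using ex_step[OF Ex.prems] by blast
    then have "eval (case_nat q' e') \<phi>" using Ex.IH q by blast
    then show "eval e' (Ex \<phi>)" by auto
  next
    assume "eval e' (Ex \<phi>)"
    then obtain q where q: "eval (case_nat q e') \<phi>" by auto
    obtain q' where "simt (terms \<phi>) (case_nat q e') (case_nat q' e)"
      using ex_step[OF simt_sym[OF Ex.prems]] by blast
    then have "eval (case_nat q' e) \<phi>" using Ex.IH q by blast
    then show "eval e (Ex \<phi>)" by auto
  qed
qed

lemma eval_foldr_Conj: "eval e (foldr Conj xs b) = ((\<forall>x\<in>set xs. eval e x) \<and> eval e b)"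
  by (induction xs) auto

lemma lt_chain_step: "eval e (lt_chain n) \<Longrightarrow> Suc i < n \<Longrightarrow> e i < e (Suc i)"
proof -
  assume h: "eval e (lt_chain n)" and i: "Suc i < n"
  have "i \<in> set [0..<n - 1]" using i by simp
  then have "eval e (Lt (Var i) (Var (Suc i)))"
    using h unfolding lt_chain_def eval_foldr_Conj by auto
  then show ?thesis by (simp add: Lt_def)
qed

lemma lt_chain_less: "eval e (lt_chain n) \<Longrightarrow> i < j \<Longrightarrow> j < n \<Longrightarrow> e i < e j"
proof (induction j)
  case 0 then show ?case by simp
next
  case (Suc j)
  have s: "e j < e (Suc j)" using lt_chain_step Suc.prems by blast
  show ?case
  proof (cases "i = j")
    case True then show ?thesis using s by simp
  next
    case False
    then have "e i < e j" using Suc by simp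
    then show ?thesis using s by simp
  qed
qed

lemma lt_chain_le: "eval e (lt_chain n) \<Longrightarrow> i < n \<Longrightarrow> j < n \<Longrightarrow> (e i \<le> e j \<longleftrightarrow> i \<le> j)"
proof -
  assume h: "eval e (lt_chain n)" "i < n" "j < n"
  show ?thesis
  proof (cases "i \<le> j")
    case True
    then have "i = j \<or> i < j" by auto
    then show ?thesis using lt_chain_less[OF h(1) _ h(3), of i] True by auto
  next
    case False
    then have "e j < e i" using lt_chain_less[OF h(1) _ h(2), of j] by simp
    then show ?thesis using False by simp
  qed
qed

lemma atom_agree:
  assumes "proj (\<lambda>i. i) 1 p = proj (\<lambda>i. i) 1 q" "proj Suc (n - 1) p = proj Suc (n - 1) q"
    and "i < n"
  shows "(Le (Var i) (Par a) \<in> p \<longleftrightarrow> Le (Var i) (Par a) \<in> q) \<and>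
         (Le (Par a) (Var i) \<in> p \<longleftrightarrow> Le (Par a) (Var i) \<in> q)"
proof (cases i)
  case 0
  have "\<And>r. Le (Var 0) (Par a) \<in> proj (\<lambda>i. i) 1 r \<longleftrightarrow> Le (Var 0) (Par a) \<in> r"
       "\<And>r. Le (Par a) (Var 0) \<in> proj (\<lambda>i. i) 1 r \<longleftrightarrow> Le (Par a) (Var 0) \<in> r"
    by (simp_all add: proj_def)
  then show ?thesis using assms(1) 0 by metis
next
  case (Suc k)
  have k: "k < n - 1" using Suc assms(3) by simp
  have "\<And>r. Le (Var k) (Par a) \<in> proj Suc (n - 1) r \<longleftrightarrow> Le (Var (Suc k)) (Par a) \<in> r"
       "\<And>r. Le (Par a) (Var k) \<in> proj Suc (n - 1) r \<longleftrightarrow> Le (Par a) (Var (Suc k)) \<in> r"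
    using k by (simp_all add: proj_def)
  then show ?thesis using assms(2) Suc by metis
qed

lemma is_type_sat: "is_type n p \<Longrightarrow> finite F \<Longrightarrow> F \<subseteq> p \<Longrightarrow> \<exists>e. \<forall>\<phi>\<in>F. eval e \<phi>"
  unfolding is_type_def by blast

lemma is_type_fv: "is_type n p \<Longrightarrow> \<phi> \<in> p \<Longrightarrow> fvars \<phi> \<subseteq> {..<n}"
  unfolding is_type_def by blast

lemma is_type_compl: "is_type n p \<Longrightarrow> fvars \<phi> \<subseteq> {..<n} \<Longrightarrow> \<phi> \<notin> p \<Longrightarrow> Neg \<phi> \<in> p"
  unfolding is_type_def by blast

lemma type_sub:
  assumes tp: "is_type n p" and tq: "is_type n q"
    and cp: "lt_chain n \<in> p" and cq: "lt_chain n \<in> q"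
    and pr1: "proj (\<lambda>i. i) 1 p = proj (\<lambda>i. i) 1 q" and pr2: "proj Suc (n - 1) p = proj Suc (n - 1) q"
  shows "p \<subseteq> q"
proof
  fix \<phi> assume \<phi>: "\<phi> \<in> p"
  show "\<phi> \<in> q"
  proof (rule ccontr)
    assume nq: "\<phi> \<notin> q"
    have fv: "fvars \<phi> \<subseteq> {..<n}" using is_type_fv[OF tp \<phi>] .
    have nphi: "Neg \<phi> \<in> q" using is_type_compl[OF tq fv nq] .
    define A where "A = params \<phi>"
    define Lits where "Lits = (\<lambda>(i,a). Le (Var i) (Par a)) ` ({..<n} \<times> A) \<union> (\<lambda>(i,a). Le (Par a) (Var i)) ` ({..<n} \<times> A)"
    have finL: "finite Lits" unfolding Lits_def A_def using finite_params by auto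
    have fvL: "\<forall>\<psi>\<in>Lits. fvars \<psi> \<subseteq> {..<n}" unfolding Lits_def by auto
    define Fp where "Fp = insert \<phi> (insert (lt_chain n) ((Lits \<union> Neg ` Lits) \<inter> p))"
    define Fq where "Fq = insert (Neg \<phi>) (insert (lt_chain n) ((Lits \<union> Neg ` Lits) \<inter> q))"
    have "finite Fp" "Fp \<subseteq> p" unfolding Fp_def using finL \<phi> cp by auto
    then obtain e where e: "\<forall>\<psi>\<in>Fp. eval e \<psi>" using is_type_sat[OF tp] by blast
    have "finite Fq" "Fq \<subseteq> q" unfolding Fq_def using finL nphi cq by auto
    then obtain e' where e': "\<forall>\<psi>\<in>Fq. eval e' \<psi>" using is_type_sat[OF tq] by blast
    have ep: "eval e \<psi> \<longleftrightarrow> \<psi> \<in> p" if "\<psi> \<in> Lits" for \<psi>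
    proof (cases "\<psi> \<in> p")
      case True then show ?thesis using e that unfolding Fp_def by auto
    next
      case False
      then have "Neg \<psi> \<in> p" using is_type_compl[OF tp] fvL that by blast
      then have "Neg \<psi> \<in> Fp" unfolding Fp_def using that by blast
      then have "eval e (Neg \<psi>)" using e by blast
      then show ?thesis using False by simp
    qed
    have eq: "eval e' \<psi> \<longleftrightarrow> \<psi> \<in> q" if "\<psi> \<in> Lits" for \<psi>
    proof (cases "\<psi> \<in> q")
      case True then show ?thesis using e' that unfolding Fq_def by auto
    next
      case False
      then have "Neg \<psi> \<in> q" using is_type_compl[OF tq] fvL that by blast
      then have "Neg \<psi> \<in> Fq" unfolding Fq_def using that by blast
      then have "eval e' (Neg \<psi>)" using e' by blast
      then show ?thesis using False by simp
    qed
    have ee: "eval e \<psi> \<longleftrightarrow> eval e' \<psi>" if "\<psi> \<in> Lits" for \<psi>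
    proof -
      from that obtain i a where ia: "i < n" "\<psi> = Le (Var i) (Par a) \<or> \<psi> = Le (Par a) (Var i)"
        unfolding Lits_def by auto
      then have "\<psi> \<in> p \<longleftrightarrow> \<psi> \<in> q" using atom_agree[OF pr1 pr2 ia(1), of a] by blast
      then show ?thesis using ep eq that by blast
    qed
    have ce: "eval e (lt_chain n)" using e unfolding Fp_def by simp
    have ce': "eval e' (lt_chain n)" using e' unfolding Fq_def by simp
    have "simt (terms \<phi>) e e'"
      unfolding simt_def
    proof (intro ballI)
      fix s t assume s: "s \<in> terms \<phi>" and t: "t \<in> terms \<phi>"
      show "(tval e s \<le> tval e t) = (tval e' s \<le> tval e' t)"
      proof (cases s)
        case (Var i)
        have i: "i < n" using s Var fv unfolding terms_def by auto
        show ?thesis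
        proof (cases t)
          case (Var j)
          have j: "j < n" using t Var fv unfolding terms_def by auto
          show ?thesis using lt_chain_le[OF ce i j] lt_chain_le[OF ce' i j] \<open>s = Var i\<close> Var by simp
        next
          case (Par a)
          have "a \<in> A" using t Par unfolding terms_def A_def by auto
          then have "Le (Var i) (Par a) \<in> Lits" using i unfolding Lits_def by auto
          then show ?thesis using ee \<open>s = Var i\<close> Par by fastforce
        qed
      next
        case (Par a)
        have a: "a \<in> A" using s Par unfolding terms_def A_def by auto
        show ?thesis
        proof (cases t)
          case (Var i)
          have i: "i < n" using t Var fv unfolding terms_def by auto
          have "Le (Par a) (Var i) \<in> Lits" using i a unfolding Lits_def by auto
          then show ?thesis using ee \<open>s = Par a\<close> Var by fastforce
        next
          case (Par b)
          then show ?thesis using \<open>s = Par a\<close> by simp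
        qed
      qed
    qed
    then have "eval e \<phi> = eval e' \<phi>" by (rule eval_simt)
    moreover have "eval e \<phi>" using e unfolding Fp_def by simp
    moreover have "\<not> eval e' \<phi>" using e' unfolding Fq_def by simp
    ultimately show False by simp
  qed
qed

theorem mainTheorem13:
  fixes n :: nat
  assumes "n \<ge> 2"
  shows "inj_on (nabla n) (S_lt n)"
proof (rule inj_onI)
  fix p q assume p: "p \<in> S_lt n" and q: "q \<in> S_lt n" and nb: "nabla n p = nabla n q"
  have tp: "is_type n p" "lt_chain n \<in> p" using p unfolding S_lt_def S_fd_def S_def by auto
  have tq: "is_type n q" "lt_chain n \<in> q" using q unfolding S_lt_def S_fd_def S_def by auto
  have pr: "proj (\<lambda>i. i) 1 p = proj (\<lambda>i. i) 1 q" "proj Suc (n - 1) p = proj Suc (n - 1) q"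
    using nb unfolding nabla_def by auto
  show "p = q"
    using type_sub[OF tp(1) tq(1) tp(2) tq(2) pr] type_sub[OF tq(1) tp(1) tq(2) tp(2) pr[symmetric]]
    by blast
qed

end
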